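(* Let $l\ge1$ be an integer and let $a_{l0}$ be real $N(0,C_l)$ and $a_{l1},\dots,a_{ll}$ complex Gaussian with independent real and imaginary parts each $N(0,C_l/2)$, all independent, with $C_l>0$; set $a_{l,-m}=(-1)^m\overline{a_{lm}}$ and $\hat C_l=\frac{1}{2l+1}\sum_{m=-l}^l|a_{lm}|^2$. For $0\le m\le l$ put $u_{lm}=a_{lm}/\sqrt{C_l}$ and $\hat u_{lm}=a_{lm}/\sqrt{\hat C_l}$. Let $1\le m_1<\dots<m_k\le l$ and let $q_0,q_1,q_1',\dots,q_k,q_k'$ be nonnegative integers with $q_0+\sum_{i=1}^k(q_i+q_i')=2p$ even. Then $$E\Big\{\hat u_{l0}^{q_0}\prod_{i=1}^k\hat u_{lm_i}^{q_i}\big(\overline{\hat u_{lm_i}}\big)^{q_i'}\Big\}=E\Big\{u_{l0}^{q_0}\prod_{i=1}^k u_{lm_i}^{q_i}\big(\overline{u_{lm_i}}\big)^{q_i'}\Big\}\,g(l;p),\qquad g(l;p)=\prod_{j=1}^p\frac{2l+1}{2l+2j-1}.$$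
   Context: $\overline{z}$ denotes complex conjugation. The variables $a_{lm}$ are the degree-$l$ spherical harmonic coefficients of a zero-mean isotropic Gaussian field with angular power spectrum $C_l$. *)

theory Defs
  imports "HOL-Probability.Probability"
begin

definition coeff_coord :: "(nat \<Rightarrow> 'a \<Rightarrow> complex) \<Rightarrow> nat \<times> bool \<Rightarrow> 'a \<Rightarrow> real" where
  "coeff_coord a = (\<lambda>(m, b) \<omega>. if b then Im (a m \<omega>) else Re (a m \<omega>))"

text \<open>Index set of the independent real Gaussian coordinates (a_{l0} is real).\<close>
definition coeff_index :: "nat \<Rightarrow> (nat \<times> bool) set" where
  "coeff_index l = {(0, False)} \<union> ({1..l} \<times> UNIV)"

definition coeff_ext :: "(nat \<Rightarrow> 'a \<Rightarrow> complex) \<Rightarrow> int \<Rightarrow> 'a \<Rightarrow> complex" where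
  "coeff_ext a m \<omega> = (if 0 \<le> m then a (nat m) \<omega> else (-1) ^ nat (- m) * cnj (a (nat (- m)) \<omega>))"

definition Chat :: "nat \<Rightarrow> (nat \<Rightarrow> 'a \<Rightarrow> complex) \<Rightarrow> 'a \<Rightarrow> real" where
  "Chat l a \<omega> = (1 / (2 * real l + 1)) * (\<Sum>m\<in>{- int l..int l}. (cmod (coeff_ext a m \<omega>))\<^sup>2)"

definition g_lp :: "nat \<Rightarrow> nat \<Rightarrow> real" where
  "g_lp l p = (\<Prod>j\<in>{1..p}. (2 * real l + 1) / (2 * real l + 2 * real j - 1))"

definition monomial_u :: "(nat \<Rightarrow> complex) \<Rightarrow> nat \<Rightarrow> (nat \<Rightarrow> nat) \<Rightarrow> nat \<Rightarrow> (nat \<Rightarrow> nat) \<Rightarrow> (nat \<Rightarrow> nat) \<Rightarrow> complex" where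
  "monomial_u u k ms q0 q q' =
     u 0 ^ q0 * (\<Prod>i\<in>{1..k}. u (ms i) ^ q i * cnj (u (ms i)) ^ q' i)"

end

theory Submission
  imports Defs
begin
lemma nd_mult:
  fixes \<sigma> r y :: real
  assumes "\<sigma> > 0" "r > 0"
  shows "normal_density 0 \<sigma> y * (r * exp (-(r\<^sup>2-1)*y\<^sup>2/(2*\<sigma>\<^sup>2))) = normal_density 0 (\<sigma>/r) y"
proof -
  have "sqrt (2*pi*(\<sigma>/r)\<^sup>2) = sqrt (2*pi*\<sigma>\<^sup>2) / r"
    using assms by (simp add: power_divide real_sqrt_divide real_sqrt_mult)
  moreover have "exp (- y\<^sup>2/(2*\<sigma>\<^sup>2)) * exp (-(r\<^sup>2-1)*y\<^sup>2/(2*\<sigma>\<^sup>2)) = exp (-y\<^sup>2/(2*(\<sigma>/r)\<^sup>2))"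
    using assms by (simp add: exp_add[symmetric] field_simps power_divide) 
  ultimately show ?thesis using assms
    unfolding normal_density_def by (simp add: field_simps)
qed

lemma nd_affine:
  fixes \<sigma> c :: real assumes "\<sigma> > 0" "c > 0"
  shows "distr (density lborel (\<lambda>y. ennreal (normal_density 0 \<sigma> y))) lborel (\<lambda>y. c * y)
       = density lborel (\<lambda>y. ennreal (normal_density 0 (c * \<sigma>) y))"
proof -
  interpret P: prob_space "density lborel (\<lambda>y. ennreal (normal_density 0 \<sigma> y))"
    by (rule prob_space_normal_density) (rule assms(1))
  have "distributed (density lborel (\<lambda>y. ennreal (normal_density 0 \<sigma> y))) lborel (\<lambda>y. y) (normal_density 0 \<sigma>)"
    unfolding distributed_def
    by (auto simp: distr_id2)
  from P.normal_density_affine[OF this assms(1), of c 0] assms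
  show ?thesis by (simp add: distributed_def)
qed

lemma PiM_density_normal:
  fixes I :: "'i set" and \<sigma> \<tau> :: "'i \<Rightarrow> real" and g :: "'i \<Rightarrow> real \<Rightarrow> real"
  assumes fin: "finite I" and sp: "\<And>i. \<sigma> i > 0" and tp: "\<And>i. \<tau> i > 0"
   and gm[measurable]: "\<And>i. g i \<in> borel_measurable borel" and gpos: "\<And>i y. g i y \<ge> 0"
   and eq: "\<And>i y. normal_density 0 (\<sigma> i) y * g i y = normal_density 0 (\<tau> i) y"
  shows "density (PiM I (\<lambda>i. density lborel (\<lambda>y. ennreal (normal_density 0 (\<sigma> i) y))))
            (\<lambda>x. \<Prod>i\<in>I. ennreal (g i (x i)))
       = PiM I (\<lambda>i. density lborel (\<lambda>y. ennreal (normal_density 0 (\<tau> i) y)))"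
proof -
  interpret T: product_prob_space "\<lambda>i. density lborel (\<lambda>y. ennreal (normal_density 0 (\<tau> i) y))"
    by (intro product_prob_spaceI prob_space_normal_density sp tp)
  interpret S: product_prob_space "\<lambda>i. density lborel (\<lambda>y. ennreal (normal_density 0 (\<sigma> i) y))"
    by (intro product_prob_spaceI prob_space_normal_density sp tp)
  show ?thesis
  proof (rule T.PiM_eqI[OF fin])
    show "sets (density (PiM I (\<lambda>i. density lborel (\<lambda>y. ennreal (normal_density 0 (\<sigma> i) y))))
            (\<lambda>x. \<Prod>i\<in>I. ennreal (g i (x i)))) = sets (PiM I (\<lambda>i. density lborel (\<lambda>y. ennreal (normal_density 0 (\<tau> i) y))))"
      by (subst sets_density) (intro sets_PiM_cong refl, simp)
  next
    fix A assume A: "\<And>i. i \<in> I \<Longrightarrow> A i \<in> sets (density lborel (\<lambda>y. ennreal (normal_density 0 (\<tau> i) y)))"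
    then have A': "\<And>i. i \<in> I \<Longrightarrow> A i \<in> sets borel" by simp
    have PE: "Pi\<^sub>E I A \<in> sets (PiM I (\<lambda>i. density lborel (\<lambda>y. ennreal (normal_density 0 (\<sigma> i) y))))"
      using A' by (intro sets_PiM_I_finite fin) auto
    have "emeasure (density (PiM I (\<lambda>i. density lborel (\<lambda>y. ennreal (normal_density 0 (\<sigma> i) y))))
            (\<lambda>x. \<Prod>i\<in>I. ennreal (g i (x i)))) (Pi\<^sub>E I A)
        = (\<integral>\<^sup>+ x. (\<Prod>i\<in>I. ennreal (g i (x i))) * indicator (Pi\<^sub>E I A) x
             \<partial>PiM I (\<lambda>i. density lborel (\<lambda>y. ennreal (normal_density 0 (\<sigma> i) y))))"
      by (rule emeasure_density[OF _ PE]) measurable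
    also have "\<dots> = (\<integral>\<^sup>+ x. (\<Prod>i\<in>I. ennreal (g i (x i)) * indicator (A i) (x i))
             \<partial>PiM I (\<lambda>i. density lborel (\<lambda>y. ennreal (normal_density 0 (\<sigma> i) y))))"
    proof (rule nn_integral_cong)
      fix x assume "x \<in> space (PiM I (\<lambda>i. density lborel (\<lambda>y. ennreal (normal_density 0 (\<sigma> i) y))))"
      then have xe: "x \<in> extensional I" by (simp add: space_PiM PiE_def)
      show "(\<Prod>i\<in>I. ennreal (g i (x i))) * indicator (Pi\<^sub>E I A) x = (\<Prod>i\<in>I. ennreal (g i (x i)) * indicator (A i) (x i))"
      proof (cases "x \<in> Pi\<^sub>E I A")
        case True
        then have "\<And>i. i \<in> I \<Longrightarrow> x i \<in> A i" by (auto simp: PiE_def Pi_def)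
        then show ?thesis using True by (simp add: indicator_def)
      next
        case False
        with xe obtain i where "i \<in> I" "x i \<notin> A i" by (auto simp: PiE_def Pi_def)
        then have "(\<Prod>i\<in>I. ennreal (g i (x i)) * indicator (A i) (x i)) = 0"
          using fin by (intro prod_zero bexI[of _ i]) auto
        then show ?thesis using False by simp
      qed
    qed
    also have "\<dots> = (\<Prod>i\<in>I. \<integral>\<^sup>+ y. ennreal (g i y) * indicator (A i) y \<partial>density lborel (\<lambda>y. ennreal (normal_density 0 (\<sigma> i) y)))"
      using A' by (intro S.product_nn_integral_prod fin) auto
    also have "\<dots> = (\<Prod>i\<in>I. emeasure (density lborel (\<lambda>y. ennreal (normal_density 0 (\<tau> i) y))) (A i))"
    proof (rule prod.cong[OF refl])
      fix i assume i: "i \<in> I"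
      have "(\<integral>\<^sup>+ y. ennreal (g i y) * indicator (A i) y \<partial>density lborel (\<lambda>y. ennreal (normal_density 0 (\<sigma> i) y)))
          = (\<integral>\<^sup>+ y. ennreal (normal_density 0 (\<sigma> i) y) * (ennreal (g i y) * indicator (A i) y) \<partial>lborel)"
        using A'[OF i] by (intro nn_integral_density) auto
      also have "\<dots> = (\<integral>\<^sup>+ y. ennreal (normal_density 0 (\<tau> i) y) * indicator (A i) y \<partial>lborel)"
      proof (intro nn_integral_cong)
        fix y
        have "ennreal (normal_density 0 (\<sigma> i) y) * ennreal (g i y) = ennreal (normal_density 0 (\<tau> i) y)"
          by (simp add: ennreal_mult[symmetric] gpos eq)
        then show "ennreal (normal_density 0 (\<sigma> i) y) * (ennreal (g i y) * indicator (A i) y) = ennreal (normal_density 0 (\<tau> i) y) * indicator (A i) y"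
          by (simp add: mult.assoc[symmetric])
      qed
      also have "\<dots> = emeasure (density lborel (\<lambda>y. ennreal (normal_density 0 (\<tau> i) y))) (A i)"
        using A'[OF i] by (subst emeasure_density) auto
      finally show "(\<integral>\<^sup>+ y. ennreal (g i y) * indicator (A i) y \<partial>density lborel (\<lambda>y. ennreal (normal_density 0 (\<sigma> i) y)))
          = emeasure (density lborel (\<lambda>y. ennreal (normal_density 0 (\<tau> i) y))) (A i)" .
    qed
    finally show "emeasure (density (PiM I (\<lambda>i. density lborel (\<lambda>y. ennreal (normal_density 0 (\<sigma> i) y))))
            (\<lambda>x. \<Prod>i\<in>I. ennreal (g i (x i)))) (Pi\<^sub>E I A) = (\<Prod>i\<in>I. emeasure (density lborel (\<lambda>y. ennreal (normal_density 0 (\<tau> i) y))) (A i))" .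
  qed
qed

definition NN :: "'i set \<Rightarrow> ('i \<Rightarrow> real) \<Rightarrow> ('i \<Rightarrow> real) measure" where
  "NN I \<sigma> = PiM I (\<lambda>i. density lborel (\<lambda>y. ennreal (normal_density 0 (\<sigma> i) y)))"
definition QQ :: "'i set \<Rightarrow> ('i \<Rightarrow> real) \<Rightarrow> ('i \<Rightarrow> real) \<Rightarrow> real" where
  "QQ I \<sigma> x = (\<Sum>i\<in>I. (x i)\<^sup>2 / (\<sigma> i)\<^sup>2)"
definition sc :: "'i set \<Rightarrow> real \<Rightarrow> ('i \<Rightarrow> real) \<Rightarrow> ('i \<Rightarrow> real)" where
  "sc I c x = (\<lambda>i\<in>I. c * x i)"

lemma sets_NN: "sets (NN I \<sigma>) = sets (PiM I (\<lambda>_. borel))"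
  unfolding NN_def by (intro sets_PiM_cong refl) simp

lemma space_NN: "space (NN I \<sigma>) = space (PiM I (\<lambda>_. borel))"
  by (rule sets_eq_imp_space_eq[OF sets_NN])

lemma prob_NN: assumes "\<And>i. \<sigma> i > 0" shows "prob_space (NN I \<sigma>)"
  unfolding NN_def
proof -
  interpret product_prob_space "\<lambda>i. density lborel (\<lambda>y. ennreal (normal_density 0 (\<sigma> i) y))"
    by (intro product_prob_spaceI prob_space_normal_density assms)
  show "prob_space (PiM I (\<lambda>i. density lborel (\<lambda>y. ennreal (normal_density 0 (\<sigma> i) y))))"
    by (rule prob_space_PiM) (simp add: prob_space_normal_density assms)
qed

lemma scaling:
  fixes I :: "'i set" and \<sigma> :: "'i \<Rightarrow> real" and G :: "('i \<Rightarrow> real) \<Rightarrow> real"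
  assumes fin: "finite I" and sp: "\<And>i. \<sigma> i > 0" and t: "t > 0"
    and Gm: "G \<in> borel_measurable (PiM I (\<lambda>_. borel))" and Gp: "\<And>x. G x \<ge> 0"
  shows "(\<integral>\<^sup>+x. ennreal (G x * (sqrt t ^ card I * exp (-(t-1) * QQ I \<sigma> x / 2))) \<partial>NN I \<sigma>)
       = (\<integral>\<^sup>+x. ennreal (G (sc I (1/sqrt t) x)) \<partial>NN I \<sigma>)"
proof -
  define r where "r = sqrt t"
  have r: "r > 0" "r\<^sup>2 = t" using t by (auto simp: r_def)
  define g where "g i y = r * exp (-(r\<^sup>2-1)*y\<^sup>2/(2*(\<sigma> i)\<^sup>2))" for i y
  have gm[measurable]: "\<And>i. g i \<in> borel_measurable borel" unfolding g_def by measurable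
  have gp: "\<And>i y. g i y \<ge> 0" unfolding g_def using r by auto
  have Gm'[measurable]: "G \<in> borel_measurable (NN I \<sigma>)"
    using Gm by (simp add: measurable_cong_sets[OF sets_NN refl])
  have eqd: "density (NN I \<sigma>) (\<lambda>x. \<Prod>i\<in>I. ennreal (g i (x i)))
      = PiM I (\<lambda>i. density lborel (\<lambda>y. ennreal (normal_density 0 (\<sigma> i / r) y)))"
    unfolding NN_def
    apply (rule PiM_density_normal[OF fin sp _ gm gp])
    using r sp apply simp
    unfolding g_def by (rule nd_mult[OF sp r(1)])
  define T where "T = PiM I (\<lambda>i. density lborel (\<lambda>y. ennreal (normal_density 0 (\<sigma> i / r) y)))"
  have sT: "sets T = sets (PiM I (\<lambda>_. borel))" unfolding T_def by (intro sets_PiM_cong refl) simp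
  have dd: "distr (density lborel (\<lambda>y. ennreal (normal_density 0 (\<sigma> i) y))) (density lborel (\<lambda>y. ennreal (normal_density 0 (\<sigma> i / r) y))) (\<lambda>y. (1/r) * y)
     = density lborel (\<lambda>y. ennreal (normal_density 0 (\<sigma> i / r) y))" for i
  proof -
    have "distr (density lborel (\<lambda>y. ennreal (normal_density 0 (\<sigma> i) y))) (density lborel (\<lambda>y. ennreal (normal_density 0 (\<sigma> i / r) y))) (\<lambda>y. (1/r) * y)
      = distr (density lborel (\<lambda>y. ennreal (normal_density 0 (\<sigma> i) y))) lborel (\<lambda>y. (1/r) * y)"
      by (rule distr_cong) auto
    also have "\<dots> = density lborel (\<lambda>y. ennreal (normal_density 0 (\<sigma> i / r) y))"
      using nd_affine[OF sp, of "1/r" i] r by simp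
    finally show ?thesis .
  qed
  have "T = PiM I (\<lambda>i. distr (density lborel (\<lambda>y. ennreal (normal_density 0 (\<sigma> i) y))) (density lborel (\<lambda>y. ennreal (normal_density 0 (\<sigma> i / r) y))) (\<lambda>y. (1/r) * y))"
    unfolding T_def dd ..
  also have "\<dots> = distr (NN I \<sigma>) T (compose I (\<lambda>y. (1/r) * y))"
    unfolding NN_def T_def
    by (rule distr_PiM_finite_prob_space'[symmetric]) (use r sp in \<open>auto simp: fin intro: prob_space_normal_density\<close>)
  finally have eqd2: "density (NN I \<sigma>) (\<lambda>x. \<Prod>i\<in>I. ennreal (g i (x i)))
      = distr (NN I \<sigma>) T (compose I (\<lambda>y. (1/r) * y))" using eqd by (simp add: T_def)
  have prodg: "(\<Prod>i\<in>I. ennreal (g i (x i))) = ennreal (sqrt t ^ card I * exp (-(t-1) * QQ I \<sigma> x / 2))" for x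
  proof -
    have "(\<Prod>i\<in>I. ennreal (g i (x i))) = ennreal (\<Prod>i\<in>I. g i (x i))"
      by (rule prod_ennreal) (simp add: gp)
    also have "(\<Prod>i\<in>I. g i (x i)) = r ^ card I * exp (\<Sum>i\<in>I. -(r\<^sup>2-1)*(x i)\<^sup>2/(2*(\<sigma> i)\<^sup>2))"
      unfolding g_def by (simp add: prod.distrib exp_sum fin)
    also have "(\<Sum>i\<in>I. -(r\<^sup>2-1)*(x i)\<^sup>2/(2*(\<sigma> i)\<^sup>2)) = -(t-1) * QQ I \<sigma> x / 2"
      unfolding QQ_def r(2) by (simp add: sum_divide_distrib sum_distrib_left mult.commute)
    finally show ?thesis by (simp add: r_def)
  qed
  have "(\<integral>\<^sup>+x. ennreal (G x * (sqrt t ^ card I * exp (-(t-1) * QQ I \<sigma> x / 2))) \<partial>NN I \<sigma>)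
      = (\<integral>\<^sup>+x. (\<Prod>i\<in>I. ennreal (g i (x i))) * ennreal (G x) \<partial>NN I \<sigma>)"
    using t by (intro nn_integral_cong) (simp add: prodg ennreal_mult Gp mult.commute)
  also have "\<dots> = (\<integral>\<^sup>+x. ennreal (G x) \<partial>density (NN I \<sigma>) (\<lambda>x. \<Prod>i\<in>I. ennreal (g i (x i))))"
  proof (rule nn_integral_density[symmetric])
    show "(\<lambda>x. \<Prod>i\<in>I. ennreal (g i (x i))) \<in> borel_measurable (NN I \<sigma>)"
      unfolding measurable_cong_sets[OF sets_NN refl] by measurable
  qed (use Gm' in auto)
  also have "\<dots> = (\<integral>\<^sup>+x. ennreal (G (compose I (\<lambda>y. (1/r) * y) x)) \<partial>NN I \<sigma>)"
    unfolding eqd2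
    apply (rule nn_integral_distr)
    subgoal unfolding measurable_cong_sets[OF sets_NN sT] compose_def by measurable
    subgoal using Gm by (simp add: measurable_cong_sets[OF sT refl])
    done
  also have "\<dots> = (\<integral>\<^sup>+x. ennreal (G (sc I (1/sqrt t) x)) \<partial>NN I \<sigma>)"
    by (simp add: compose_def sc_def r_def)
  finally show ?thesis .
qed

definition hom :: "'i set \<Rightarrow> nat \<Rightarrow> (('i \<Rightarrow> real) \<Rightarrow> real) \<Rightarrow> bool" where
  "hom I d G \<longleftrightarrow> (\<forall>x\<in>space (PiM I (\<lambda>_. borel)). \<forall>c>0. G (sc I c x) = c ^ (2*d) * G x)"

lemma scaling_hom:
  fixes I :: "'i set" and \<sigma> :: "'i \<Rightarrow> real" and G :: "('i \<Rightarrow> real) \<Rightarrow> real"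
  assumes fin: "finite I" and sp: "\<And>i. \<sigma> i > 0" and t: "t > 0"
    and Gm: "G \<in> borel_measurable (PiM I (\<lambda>_. borel))" and Gp: "\<And>x. G x \<ge> 0"
    and h: "hom I d G"
  shows "(\<integral>\<^sup>+x. ennreal (G x * exp (-(t-1) * QQ I \<sigma> x / 2)) \<partial>NN I \<sigma>)
       = ennreal (t powr (-(real (card I)/2 + real d))) * (\<integral>\<^sup>+x. ennreal (G x) \<partial>NN I \<sigma>)"
proof -
  define s where "s = sqrt t ^ card I"
  have s: "s > 0" using t by (simp add: s_def)
  have Gm'[measurable]: "G \<in> borel_measurable (NN I \<sigma>)"
    using Gm by (simp add: measurable_cong_sets[OF sets_NN refl])
  have Qm[measurable]: "QQ I \<sigma> \<in> borel_measurable (NN I \<sigma>)"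
    unfolding measurable_cong_sets[OF sets_NN refl] QQ_def by measurable
  have "(\<integral>\<^sup>+x. ennreal (G x * exp (-(t-1) * QQ I \<sigma> x / 2)) \<partial>NN I \<sigma>)
      = (\<integral>\<^sup>+x. ennreal (1/s) * ennreal (G x * (s * exp (-(t-1) * QQ I \<sigma> x / 2))) \<partial>NN I \<sigma>)"
    using s by (intro nn_integral_cong) (simp add: ennreal_mult[symmetric] Gp)
  also have "\<dots> = ennreal (1/s) * (\<integral>\<^sup>+x. ennreal (G x * (s * exp (-(t-1) * QQ I \<sigma> x / 2))) \<partial>NN I \<sigma>)"
    by (rule nn_integral_cmult) measurable
  also have "(\<integral>\<^sup>+x. ennreal (G x * (s * exp (-(t-1) * QQ I \<sigma> x / 2))) \<partial>NN I \<sigma>)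
      = (\<integral>\<^sup>+x. ennreal (G (sc I (1/sqrt t) x)) \<partial>NN I \<sigma>)"
    unfolding s_def by (rule scaling[OF fin sp t Gm Gp])
  also have "\<dots> = (\<integral>\<^sup>+x. ennreal ((1/t)^d) * ennreal (G x) \<partial>NN I \<sigma>)"
  proof (rule nn_integral_cong)
    fix x assume "x \<in> space (NN I \<sigma>)"
    then have "x \<in> space (PiM I (\<lambda>_. borel))" by (simp add: space_NN)
    with h t have "G (sc I (1/sqrt t) x) = (1/sqrt t)^(2*d) * G x" unfolding hom_def by simp
    also have "(1/sqrt t)^(2*d) = (1/t)^d" using t by (simp add: power_mult power_divide)
    finally show "ennreal (G (sc I (1/sqrt t) x)) = ennreal ((1/t)^d) * ennreal (G x)"
      using t by (simp add: ennreal_mult Gp)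
  qed
  also have "\<dots> = ennreal ((1/t)^d) * (\<integral>\<^sup>+x. ennreal (G x) \<partial>NN I \<sigma>)"
    by (rule nn_integral_cmult) measurable
  also have "ennreal (1/s) * (ennreal ((1/t)^d) * (\<integral>\<^sup>+x. ennreal (G x) \<partial>NN I \<sigma>))
      = ennreal (1/s * (1/t)^d) * (\<integral>\<^sup>+x. ennreal (G x) \<partial>NN I \<sigma>)"
    using s t by (subst ennreal_mult) (auto simp: mult.assoc)
  also have "1/s * (1/t)^d = t powr (-(real (card I)/2 + real d))"
  proof -
    have "s = t powr (real (card I)/2)" unfolding s_def using t
      by (simp add: powr_half_sqrt[symmetric] powr_realpow[symmetric] powr_powr)
    moreover have "(1/t)^d = t powr (- real d)"
    proof -
      have "(1/t)^d = 1 / t^d" by (rule power_one_over)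
      also have "t^d = t powr (real d)" using t by (rule powr_realpow[symmetric])
      also have "1 / t powr (real d) = t powr (- real d)" by (rule powr_minus_divide[symmetric])
      finally show ?thesis .
    qed
    ultimately have "1/s * (1/t)^d = t powr (-(real (card I)/2)) * t powr (- real d)"
      by (simp add: powr_minus_divide)
    also have "\<dots> = t powr (-(real (card I)/2) + - real d)" by (rule powr_add[symmetric])
    finally show ?thesis by simp
  qed
  finally show ?thesis .
qed

lemma QQ_nonneg: "QQ I \<sigma> x \<ge> 0"
  unfolding QQ_def by (intro sum_nonneg) auto

lemma QQ_zero_sc:
  assumes fin: "finite I" and sp: "\<And>i. \<sigma> i > 0" and x: "x \<in> space (PiM I (\<lambda>_. borel))"
    and q: "QQ I \<sigma> x = 0"
  shows "sc I c x = x"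
proof -
  have "\<forall>i\<in>I. (x i)\<^sup>2 / (\<sigma> i)\<^sup>2 = 0"
    using q fin unfolding QQ_def by (subst (asm) sum_nonneg_eq_0_iff) auto
  then have z: "x i = 0" if "i \<in> I" for i
  proof -
    have "(x i)\<^sup>2 / (\<sigma> i)\<^sup>2 = 0" using \<open>\<forall>i\<in>I. (x i)\<^sup>2 / (\<sigma> i)\<^sup>2 = 0\<close> that by blast
    then show "x i = 0" using sp[of i] by simp
  qed
  have "x \<in> extensional I" using x by (simp add: space_PiM PiE_def)
  then show ?thesis unfolding sc_def using z by (auto simp: extensional_def fun_eq_iff)
qed

lemma hom_zero:
  assumes fin: "finite I" and sp: "\<And>i. \<sigma> i > 0" and x: "x \<in> space (PiM I (\<lambda>_. borel))"
    and q: "QQ I \<sigma> x = 0" and h: "hom I d G" and d: "d \<ge> 1"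
  shows "G x = 0"
proof -
  have "G (sc I 2 x) = 2 ^ (2*d) * G x"
    using h x unfolding hom_def by simp
  then have e: "G x = 2 ^ (2*d) * G x" using QQ_zero_sc[OF fin sp x q, of 2] by simp
  have "(2::real) ^ (2*d) > 1" using d by (intro one_less_power) auto
  moreover have "(2 ^ (2*d) - 1) * G x = 0" using e by (simp add: algebra_simps)
  ultimately show ?thesis by simp
qed

lemma div_Q:
  fixes I :: "'i set" and \<sigma> :: "'i \<Rightarrow> real" and G :: "('i \<Rightarrow> real) \<Rightarrow> real"
  assumes fin: "finite I" and ne: "I \<noteq> {}" and sp: "\<And>i. \<sigma> i > 0"
    and Gm: "G \<in> borel_measurable (PiM I (\<lambda>_. borel))" and Gp: "\<And>x. G x \<ge> 0"
    and h: "hom I d G" and d: "d \<ge> 1"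
  shows "(\<integral>\<^sup>+x. ennreal (G x / QQ I \<sigma> x) \<partial>NN I \<sigma>)
       = ennreal (1 / (real (card I) + 2 * real d - 2)) * (\<integral>\<^sup>+x. ennreal (G x) \<partial>NN I \<sigma>)"
proof -
  define n where "n = real (card I)"
  have n: "n \<ge> 1" using fin ne by (simp add: n_def Suc_le_eq card_gt_0_iff)
  define e where "e = -(n/2 + real d)"
  have e: "e < -1" using n d by (simp add: e_def)
  have Gm'[measurable]: "G \<in> borel_measurable (NN I \<sigma>)"
    using Gm by (simp add: measurable_cong_sets[OF sets_NN refl])
  have Qm[measurable]: "QQ I \<sigma> \<in> borel_measurable (NN I \<sigma>)"
    unfolding measurable_cong_sets[OF sets_NN refl] QQ_def by measurable
  define K where "K x t = indicator {1..} t * (G x * exp (-(t-1) * QQ I \<sigma> x / 2) / 2)" for x t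
  have Km[measurable]: "(\<lambda>(x, t). ennreal (K x t)) \<in> borel_measurable (NN I \<sigma> \<Otimes>\<^sub>M lborel)"
    unfolding K_def by measurable
  interpret PS: pair_sigma_finite "NN I \<sigma>" lborel
    unfolding pair_sigma_finite_def
    using prob_space_imp_sigma_finite[OF prob_NN[OF sp]] lborel.sigma_finite_measure_axioms by auto
  have pw: "ennreal (G x / QQ I \<sigma> x) = (\<integral>\<^sup>+t. ennreal (K x t) \<partial>lborel)" if x: "x \<in> space (NN I \<sigma>)" for x
  proof (cases "QQ I \<sigma> x = 0")
    case True
    then have "G x = 0" using hom_zero[OF fin sp _ True h d] x by (simp add: space_NN)
    then show ?thesis by (simp add: K_def)
  next
    case False
    define q where "q = QQ I \<sigma> x"
    have q: "q > 0" using False QQ_nonneg[of I \<sigma> x] by (simp add: q_def)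
    have "((\<lambda>t. (G x * exp (q/2) / 2) * exp (-(q/2)*t)) has_integral (G x * exp (q/2) / 2) * (exp (-(q/2)*1)/(q/2))) {1..}"
      by (intro has_integral_mult_right has_integral_exp_minus_to_infinity) (use q in simp)
    then have "(\<integral>\<^sup>+t. ennreal (indicator {1..} t * ((G x * exp (q/2) / 2) * exp (-(q/2)*t))) \<partial>lborel)
        = (G x * exp (q/2) / 2) * (exp (-(q/2)*1)/(q/2))"
      by (intro nn_integral_has_integral_lebesgue) (use Gp in auto)
    also have "(G x * exp (q/2) / 2) * (exp (-(q/2)*1)/(q/2)) = G x / q"
      using q by (simp add: field_simps exp_minus)
    also have "(\<lambda>t. ennreal (indicator {1..} t * ((G x * exp (q/2) / 2) * exp (-(q/2)*t)))) = (\<lambda>t. ennreal (K x t))"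
    proof
      fix t
      have "exp (q/2) * exp (-(q/2)*t) = exp (-(t-1) * q / 2)" by (simp add: exp_add[symmetric] algebra_simps)
      then show "ennreal (indicator {1..} t * ((G x * exp (q/2) / 2) * exp (-(q/2)*t))) = ennreal (K x t)"
        unfolding K_def q_def[symmetric] by (simp add: mult.assoc mult.left_commute)
    qed
    finally show ?thesis by (simp add: q_def)
  qed
  have "(\<integral>\<^sup>+x. ennreal (G x / QQ I \<sigma> x) \<partial>NN I \<sigma>) = (\<integral>\<^sup>+x. \<integral>\<^sup>+t. ennreal (K x t) \<partial>lborel \<partial>NN I \<sigma>)"
    by (intro nn_integral_cong pw)
  also have "\<dots> = (\<integral>\<^sup>+t. \<integral>\<^sup>+x. ennreal (K x t) \<partial>NN I \<sigma> \<partial>lborel)"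
    using PS.Fubini'[of "\<lambda>x t. ennreal (K x t)"] Km by simp
  also have "\<dots> = (\<integral>\<^sup>+t. ennreal (indicator {1..} t * (t powr e / 2)) * (\<integral>\<^sup>+x. ennreal (G x) \<partial>NN I \<sigma>) \<partial>lborel)"
  proof (rule nn_integral_cong)
    fix t :: real
    show "(\<integral>\<^sup>+x. ennreal (K x t) \<partial>NN I \<sigma>) = ennreal (indicator {1..} t * (t powr e / 2)) * (\<integral>\<^sup>+x. ennreal (G x) \<partial>NN I \<sigma>)"
    proof (cases "t \<ge> 1")
      case True
      have "(\<integral>\<^sup>+x. ennreal (K x t) \<partial>NN I \<sigma>) = (\<integral>\<^sup>+x. ennreal (1/2) * ennreal (G x * exp (-(t-1) * QQ I \<sigma> x / 2)) \<partial>NN I \<sigma>)"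
      proof (rule nn_integral_cong)
        fix x
        have "K x t = 1/2 * (G x * exp (-(t-1) * QQ I \<sigma> x / 2))" using True by (simp add: K_def)
        then show "ennreal (K x t) = ennreal (1/2) * ennreal (G x * exp (-(t-1) * QQ I \<sigma> x / 2))"
          by (simp only: ) (rule ennreal_mult, simp, simp add: Gp)
      qed
      also have "\<dots> = ennreal (1/2) * (\<integral>\<^sup>+x. ennreal (G x * exp (-(t-1) * QQ I \<sigma> x / 2)) \<partial>NN I \<sigma>)"
        by (rule nn_integral_cmult) measurable
      also have "(\<integral>\<^sup>+x. ennreal (G x * exp (-(t-1) * QQ I \<sigma> x / 2)) \<partial>NN I \<sigma>) = ennreal (t powr e) * (\<integral>\<^sup>+x. ennreal (G x) \<partial>NN I \<sigma>)"
        unfolding e_def n_def by (rule scaling_hom[OF fin sp _ Gm Gp h]) (use True in simp)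
      also have "ennreal (1/2) * (ennreal (t powr e) * (\<integral>\<^sup>+x. ennreal (G x) \<partial>NN I \<sigma>)) = ennreal (indicator {1..} t * (t powr e / 2)) * (\<integral>\<^sup>+x. ennreal (G x) \<partial>NN I \<sigma>)"
      proof -
        have c: "ennreal (1/2) * ennreal (t powr e) = ennreal (indicator {1..} t * (t powr e / 2))"
          using True by (subst ennreal_mult[symmetric]) (auto simp: mult.commute)
        show ?thesis by (metis c mult.assoc)
      qed
      finally show ?thesis .
    next
      case False
      then show ?thesis by (simp add: K_def)
    qed
  qed
  also have "\<dots> = (\<integral>\<^sup>+t. ennreal (indicator {1..} t * (t powr e / 2)) \<partial>lborel) * (\<integral>\<^sup>+x. ennreal (G x) \<partial>NN I \<sigma>)"
    by (rule nn_integral_multc) measurable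
  also have "(\<integral>\<^sup>+t. ennreal (indicator {1..} t * (t powr e / 2)) \<partial>lborel) = ennreal (1 / (n + 2 * real d - 2))"
  proof -
    have "((\<lambda>t. t powr e / 2) has_integral (-(1 powr (e+1)) / (e+1)) / 2) {1..}"
      by (intro has_integral_divide has_integral_powr_to_inf e) simp
    then have "(\<integral>\<^sup>+t. ennreal (indicator {1..} t * (t powr e / 2)) \<partial>lborel) = (-(1 powr (e+1)) / (e+1)) / 2"
      by (intro nn_integral_has_integral_lebesgue) auto
    also have "(-(1 powr (e+1)) / (e+1)) / 2 = 1 / (n + 2 * real d - 2)"
    proof -
      have p: "n + 2 * real d - 2 > 0" using n d by simp
      have "e + 1 = -((n + 2 * real d - 2) / 2)" by (simp add: e_def add_divide_distrib diff_divide_distrib)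
      then have "(-(1 powr (e+1)) / (e+1)) / 2 = 2 / (2 * (n + 2 * real d - 2))"
        using p by (simp add: powr_one_eq_one)
      also have "\<dots> = 1 / (n + 2 * real d - 2)"
      proof -
        have gen: "\<And>y::real. y \<noteq> 0 \<Longrightarrow> 2 / (2 * y) = 1 / y" by simp
        show ?thesis using p by (intro gen) simp
      qed
      finally show ?thesis .
    qed
    finally show ?thesis .
  qed
  finally show ?thesis by (simp add: n_def)
qed

lemma QQ_sc:
  assumes "x \<in> space (PiM I (\<lambda>_. borel))"
  shows "QQ I \<sigma> (sc I c x) = c\<^sup>2 * QQ I \<sigma> x"
  unfolding QQ_def sc_def by (simp add: sum_distrib_left power_mult_distrib mult.assoc)

lemma sc_space: "x \<in> space (PiM I (\<lambda>_. borel)) \<Longrightarrow> sc I c x \<in> space (PiM I (\<lambda>_. borel))"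
  unfolding sc_def by (simp add: space_PiM)

lemma hom_div_Q:
  assumes h: "hom I (Suc p) G"
  shows "hom I p (\<lambda>x. G x / QQ I \<sigma> x)"
  unfolding hom_def
proof (intro ballI allI impI)
  fix x :: "'a \<Rightarrow> real" and c :: real assume x: "x \<in> space (PiM I (\<lambda>_. borel))" and c: "c > 0"
  have "G (sc I c x) / QQ I \<sigma> (sc I c x) = (c ^ (2 * Suc p) * G x) / (c\<^sup>2 * QQ I \<sigma> x)"
    using h x c unfolding hom_def by (simp add: QQ_sc)
  also have "\<dots> = c ^ (2 * p) * (G x / QQ I \<sigma> x)"
    using c by (simp add: power_mult power2_eq_square)
  finally show "G (sc I c x) / QQ I \<sigma> (sc I c x) = c ^ (2 * p) * (G x / QQ I \<sigma> x)" .
qed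

lemma hom_Qp: "hom I p (\<lambda>x. QQ I \<sigma> x ^ p)"
  unfolding hom_def by (simp add: QQ_sc power_mult_distrib power_mult)

lemma hom_max: assumes "hom I p H" shows "hom I p (\<lambda>x. max (H x) 0)"
  unfolding hom_def
proof (intro ballI allI impI)
  fix x :: "'a \<Rightarrow> real" and c :: real assume x: "x \<in> space (PiM I (\<lambda>_. borel))" and c: "c > 0"
  have cp: "c ^ (2*p) > 0" using c by simp
  have "H (sc I c x) = c ^ (2*p) * H x" using assms x c unfolding hom_def by simp
  then show "max (H (sc I c x)) 0 = c ^ (2 * p) * max (H x) 0"
    using cp by (simp add: max_mult_distrib_left)
qed

lemma hom_uminus: assumes "hom I p H" shows "hom I p (\<lambda>x. - H x)"
  using assms unfolding hom_def by simp

lemma div_Qp: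
  fixes I :: "'i set" and \<sigma> :: "'i \<Rightarrow> real" and G :: "('i \<Rightarrow> real) \<Rightarrow> real"
  assumes fin: "finite I" and ne: "I \<noteq> {}" and sp: "\<And>i. \<sigma> i > 0"
    and Gm: "G \<in> borel_measurable (PiM I (\<lambda>_. borel))" and Gp: "\<And>x. G x \<ge> 0"
    and h: "hom I p G"
  shows "(\<integral>\<^sup>+x. ennreal (G x / QQ I \<sigma> x ^ p) \<partial>NN I \<sigma>)
       = ennreal (1 / (\<Prod>j\<in>{1..p}. real (card I) + 2 * real j - 2)) * (\<integral>\<^sup>+x. ennreal (G x) \<partial>NN I \<sigma>)"
  using Gm Gp h
proof (induction p arbitrary: G)
  case 0
  then show ?case by simp
next
  case (Suc p)
  define G' where "G' x = G x / QQ I \<sigma> x" for x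
  have Qm[measurable]: "QQ I \<sigma> \<in> borel_measurable (PiM I (\<lambda>_. borel))"
    unfolding QQ_def by measurable
  have G'm: "G' \<in> borel_measurable (PiM I (\<lambda>_. borel))" unfolding G'_def using Suc.prems(1) by measurable
  have G'p: "\<And>x. G' x \<ge> 0" unfolding G'_def using Suc.prems(2) QQ_nonneg by (metis divide_nonneg_nonneg)
  have hG': "hom I p G'" unfolding G'_def by (rule hom_div_Q[OF Suc.prems(3)])
  have n: "real (card I) \<ge> 1" using fin ne by (simp add: Suc_le_eq card_gt_0_iff)
  have "(\<integral>\<^sup>+x. ennreal (G x / QQ I \<sigma> x ^ Suc p) \<partial>NN I \<sigma>) = (\<integral>\<^sup>+x. ennreal (G' x / QQ I \<sigma> x ^ p) \<partial>NN I \<sigma>)"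
    by (intro nn_integral_cong) (simp add: G'_def divide_divide_eq_left)
  also have "\<dots> = ennreal (1 / (\<Prod>j\<in>{1..p}. real (card I) + 2 * real j - 2)) * (\<integral>\<^sup>+x. ennreal (G' x) \<partial>NN I \<sigma>)"
    by (rule Suc.IH[OF G'm G'p hG'])
  also have "(\<integral>\<^sup>+x. ennreal (G' x) \<partial>NN I \<sigma>) = ennreal (1 / (real (card I) + 2 * real (Suc p) - 2)) * (\<integral>\<^sup>+x. ennreal (G x) \<partial>NN I \<sigma>)"
    unfolding G'_def by (rule div_Q[OF fin ne sp Suc.prems]) simp
  also have "ennreal (1 / (\<Prod>j\<in>{1..p}. real (card I) + 2 * real j - 2)) * (ennreal (1 / (real (card I) + 2 * real (Suc p) - 2)) * (\<integral>\<^sup>+x. ennreal (G x) \<partial>NN I \<sigma>))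
     = ennreal (1 / (\<Prod>j\<in>{1..Suc p}. real (card I) + 2 * real j - 2)) * (\<integral>\<^sup>+x. ennreal (G x) \<partial>NN I \<sigma>)"
  proof -
    have pp: "(\<Prod>j\<in>{1..p}. real (card I) + 2 * real j - 2) > 0"
      using n by (intro prod_pos) auto
    have p2: "real (card I) + 2 * real (Suc p) - 2 > 0" using n by simp
    have "ennreal (1 / (\<Prod>j\<in>{1..p}. real (card I) + 2 * real j - 2)) * ennreal (1 / (real (card I) + 2 * real (Suc p) - 2))
       = ennreal (1 / (\<Prod>j\<in>{1..p}. real (card I) + 2 * real j - 2) * (1 / (real (card I) + 2 * real (Suc p) - 2)))"
      using pp p2 by (subst ennreal_mult) auto
    also have "1 / (\<Prod>j\<in>{1..p}. real (card I) + 2 * real j - 2) * (1 / (real (card I) + 2 * real (Suc p) - 2))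
       = 1 / (\<Prod>j\<in>{1..Suc p}. real (card I) + 2 * real j - 2)"
      by (subst prod.nat_ivl_Suc') (auto simp: mult.commute)
    finally have c: "ennreal (1 / (\<Prod>j\<in>{1..p}. real (card I) + 2 * real j - 2)) * ennreal (1 / (real (card I) + 2 * real (Suc p) - 2)) = ennreal (1 / (\<Prod>j\<in>{1..Suc p}. real (card I) + 2 * real j - 2))" .
    show ?thesis by (simp only: mult.assoc[symmetric] c)
  qed
  finally show ?case .
qed

lemma Qp_finite:
  fixes I :: "'i set" and \<sigma> :: "'i \<Rightarrow> real"
  assumes fin: "finite I" and ne: "I \<noteq> {}" and sp: "\<And>i. \<sigma> i > 0"
  shows "(\<integral>\<^sup>+x. ennreal (QQ I \<sigma> x ^ p) \<partial>NN I \<sigma>) < \<infinity>"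
proof (rule ccontr)
  assume inf: "\<not> (\<integral>\<^sup>+x. ennreal (QQ I \<sigma> x ^ p) \<partial>NN I \<sigma>) < \<infinity>"
  interpret P: prob_space "NN I \<sigma>" by (rule prob_NN[OF sp])
  have Qm[measurable]: "QQ I \<sigma> \<in> borel_measurable (PiM I (\<lambda>_. borel))"
    unfolding QQ_def by measurable
  have Qm'[measurable]: "QQ I \<sigma> \<in> borel_measurable (NN I \<sigma>)"
    unfolding measurable_cong_sets[OF sets_NN refl] QQ_def by measurable
  have n: "real (card I) \<ge> 1" using fin ne by (simp add: Suc_le_eq card_gt_0_iff)
  define P where "P = (\<Prod>j\<in>{1..p}. real (card I) + 2 * real j - 2)"
  have pp: "P > 0" unfolding P_def using n by (intro prod_pos) auto
  have eq: "(\<integral>\<^sup>+x. ennreal (QQ I \<sigma> x ^ p / QQ I \<sigma> x ^ p) \<partial>NN I \<sigma>)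
       = ennreal (1 / P) * (\<integral>\<^sup>+x. ennreal (QQ I \<sigma> x ^ p) \<partial>NN I \<sigma>)"
    unfolding P_def by (rule div_Qp[OF fin ne sp _ _ hom_Qp]) (auto simp: QQ_nonneg)
  have "(\<integral>\<^sup>+x. ennreal (QQ I \<sigma> x ^ p / QQ I \<sigma> x ^ p) \<partial>NN I \<sigma>) \<le> (\<integral>\<^sup>+x. 1 \<partial>NN I \<sigma>)"
    by (intro nn_integral_mono) (simp add: divide_self_if)
  also have "\<dots> = 1" by (simp add: P.emeasure_space_1)
  finally have le: "(\<integral>\<^sup>+x. ennreal (QQ I \<sigma> x ^ p / QQ I \<sigma> x ^ p) \<partial>NN I \<sigma>) \<le> 1" .
  have "(\<integral>\<^sup>+x. ennreal (QQ I \<sigma> x ^ p) \<partial>NN I \<sigma>) = \<infinity>" using inf by (simp add: not_less top_unique)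
  then have "(\<integral>\<^sup>+x. ennreal (QQ I \<sigma> x ^ p / QQ I \<sigma> x ^ p) \<partial>NN I \<sigma>) = \<infinity>"
  proof -
    have "ennreal (1/P) \<noteq> 0" using pp by simp
    then show ?thesis unfolding eq using \<open>(\<integral>\<^sup>+x. ennreal (QQ I \<sigma> x ^ p) \<partial>NN I \<sigma>) = \<infinity>\<close> by (simp add: ennreal_mult_top)
  qed
  with le have "(\<infinity>::ennreal) \<le> 1" by (simp only: )
  then show False by (simp add: top_unique)
qed

lemma real_div_Qp:
  fixes I :: "'i set" and \<sigma> :: "'i \<Rightarrow> real" and H :: "('i \<Rightarrow> real) \<Rightarrow> real"
  assumes fin: "finite I" and ne: "I \<noteq> {}" and sp: "\<And>i. \<sigma> i > 0"
    and Hm[measurable]: "H \<in> borel_measurable (PiM I (\<lambda>_. borel))" and h: "hom I p H"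
    and K: "K \<ge> 0" and bnd: "\<And>x. x \<in> space (PiM I (\<lambda>_. borel)) \<Longrightarrow> \<bar>H x\<bar> \<le> K * QQ I \<sigma> x ^ p"
  shows "integrable (NN I \<sigma>) H" "integrable (NN I \<sigma>) (\<lambda>x. H x / QQ I \<sigma> x ^ p)"
    "(\<integral>x. H x / QQ I \<sigma> x ^ p \<partial>NN I \<sigma>) = (\<integral>x. H x \<partial>NN I \<sigma>) / (\<Prod>j\<in>{1..p}. real (card I) + 2 * real j - 2)"
proof -
  interpret P: prob_space "NN I \<sigma>" by (rule prob_NN[OF sp])
  define P where "P = (\<Prod>j\<in>{1..p}. real (card I) + 2 * real j - 2)"
  have n: "real (card I) \<ge> 1" using fin ne by (simp add: Suc_le_eq card_gt_0_iff)
  have pp: "P > 0" unfolding P_def using n by (intro prod_pos) auto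
  have Qm[measurable]: "QQ I \<sigma> \<in> borel_measurable (PiM I (\<lambda>_. borel))"
    unfolding QQ_def by measurable
  have sN: "\<And>f. f \<in> borel_measurable (NN I \<sigma>) \<longleftrightarrow> f \<in> borel_measurable (PiM I (\<lambda>_. borel))"
    using measurable_cong_sets[OF sets_NN refl] by blast
  have spN: "space (NN I \<sigma>) = space (PiM I (\<lambda>_. borel))" by (rule space_NN)
  have iQ: "integrable (NN I \<sigma>) (\<lambda>x. K * QQ I \<sigma> x ^ p)"
  proof -
    have "integrable (NN I \<sigma>) (\<lambda>x. QQ I \<sigma> x ^ p)"
    proof (rule integrableI_bounded)
      show "(\<lambda>x. QQ I \<sigma> x ^ p) \<in> borel_measurable (NN I \<sigma>)" unfolding sN by measurable
      have "(\<integral>\<^sup>+x. ennreal (norm (QQ I \<sigma> x ^ p)) \<partial>NN I \<sigma>) = (\<integral>\<^sup>+x. ennreal (QQ I \<sigma> x ^ p) \<partial>NN I \<sigma>)"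
        by (intro nn_integral_cong) (simp add: QQ_nonneg)
      also have "\<dots> < \<infinity>" by (rule Qp_finite[OF fin ne sp])
      finally show "(\<integral>\<^sup>+x. ennreal (norm (QQ I \<sigma> x ^ p)) \<partial>NN I \<sigma>) < \<infinity>" .
    qed
    then show ?thesis by simp
  qed
  have intH: "integrable (NN I \<sigma>) G" if Gm: "G \<in> borel_measurable (PiM I (\<lambda>_. borel))"
    and Gb: "\<And>x. x \<in> space (PiM I (\<lambda>_. borel)) \<Longrightarrow> \<bar>G x\<bar> \<le> \<bar>H x\<bar>" for G
  proof (rule Bochner_Integration.integrable_bound[OF iQ])
    show "G \<in> borel_measurable (NN I \<sigma>)" unfolding sN by (rule Gm)
    show "AE x in NN I \<sigma>. norm (G x) \<le> norm (K * QQ I \<sigma> x ^ p)"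
    proof (intro AE_I2)
      fix x assume "x \<in> space (NN I \<sigma>)"
      then have x': "x \<in> space (PiM I (\<lambda>_. borel))" by (simp add: spN)
      have "0 \<le> K * QQ I \<sigma> x ^ p" using K QQ_nonneg[of I \<sigma> x] by simp
      then show "norm (G x) \<le> norm (K * QQ I \<sigma> x ^ p)" using Gb[OF x'] bnd[OF x'] by simp
    qed
  qed
  have intD: "integrable (NN I \<sigma>) (\<lambda>x. G x / QQ I \<sigma> x ^ p)" if Gm: "G \<in> borel_measurable (PiM I (\<lambda>_. borel))"
    and Gb: "\<And>x. x \<in> space (PiM I (\<lambda>_. borel)) \<Longrightarrow> \<bar>G x\<bar> \<le> \<bar>H x\<bar>" for G
  proof (rule P.integrable_const_bound[where B=K])
    show "(\<lambda>x. G x / QQ I \<sigma> x ^ p) \<in> borel_measurable (NN I \<sigma>)"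
    proof -
      note Gm[measurable]
      show ?thesis unfolding sN by measurable
    qed
    show "AE x in NN I \<sigma>. norm (G x / QQ I \<sigma> x ^ p) \<le> K"
    proof (intro AE_I2)
      fix x assume x: "x \<in> space (NN I \<sigma>)"
      then have x': "x \<in> space (PiM I (\<lambda>_. borel))" by (simp add: spN)
      show "norm (G x / QQ I \<sigma> x ^ p) \<le> K"
      proof (cases "QQ I \<sigma> x = 0")
        case True
        then show ?thesis using K Gb[OF x'] bnd[OF x'] by (cases p) auto
      next
        case False
        then have q: "QQ I \<sigma> x ^ p > 0" using QQ_nonneg[of I \<sigma> x] by simp
        have "\<bar>G x\<bar> \<le> K * QQ I \<sigma> x ^ p" using Gb[OF x'] bnd[OF x'] by linarith
        then show ?thesis using q by (simp add: abs_divide pos_divide_le_eq)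
      qed
    qed
  qed
  define Hp where "Hp x = max (H x) 0" for x
  define Hn where "Hn x = max (- H x) 0" for x
  have Hpm[measurable]: "Hp \<in> borel_measurable (PiM I (\<lambda>_. borel))" unfolding Hp_def by measurable
  have Hnm[measurable]: "Hn \<in> borel_measurable (PiM I (\<lambda>_. borel))" unfolding Hn_def by measurable
  have Hpb: "\<And>x. \<bar>Hp x\<bar> \<le> \<bar>H x\<bar>" "\<And>x. \<bar>Hn x\<bar> \<le> \<bar>H x\<bar>" by (auto simp: Hp_def Hn_def)
  show iH: "integrable (NN I \<sigma>) H" by (rule intH) auto
  show iD: "integrable (NN I \<sigma>) (\<lambda>x. H x / QQ I \<sigma> x ^ p)" by (rule intD) auto
  have part: "(\<integral>x. G x / QQ I \<sigma> x ^ p \<partial>NN I \<sigma>) = (\<integral>x. G x \<partial>NN I \<sigma>) / P"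
    if Gm: "G \<in> borel_measurable (PiM I (\<lambda>_. borel))" and Gp: "\<And>x. G x \<ge> 0" and hG: "hom I p G" for G
  proof -
    have Gm': "G \<in> borel_measurable (NN I \<sigma>)" using Gm by (simp add: sN)
    have "(\<integral>x. G x / QQ I \<sigma> x ^ p \<partial>NN I \<sigma>) = enn2real (\<integral>\<^sup>+x. ennreal (G x / QQ I \<sigma> x ^ p) \<partial>NN I \<sigma>)"
    proof (rule integral_eq_nn_integral)
      note Gm[measurable]
      show "(\<lambda>x. G x / QQ I \<sigma> x ^ p) \<in> borel_measurable (NN I \<sigma>)" unfolding sN by measurable
      have "\<And>x. 0 \<le> G x / QQ I \<sigma> x ^ p" using Gp QQ_nonneg by (metis divide_nonneg_nonneg zero_le_power)
      then show "AE x in NN I \<sigma>. 0 \<le> G x / QQ I \<sigma> x ^ p" by simp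
    qed
    also have "\<dots> = enn2real (ennreal (1 / P) * (\<integral>\<^sup>+x. ennreal (G x) \<partial>NN I \<sigma>))"
      unfolding P_def by (subst div_Qp[OF fin ne sp Gm Gp hG]) rule
    also have "\<dots> = 1 / P * enn2real (\<integral>\<^sup>+x. ennreal (G x) \<partial>NN I \<sigma>)"
      using pp by (simp add: enn2real_mult)
    also have "enn2real (\<integral>\<^sup>+x. ennreal (G x) \<partial>NN I \<sigma>) = (\<integral>x. G x \<partial>NN I \<sigma>)"
      by (rule integral_eq_nn_integral[symmetric]) (use Gm' Gp in auto)
    finally show ?thesis by simp
  qed
  have "(\<integral>x. H x / QQ I \<sigma> x ^ p \<partial>NN I \<sigma>) = (\<integral>x. Hp x / QQ I \<sigma> x ^ p - Hn x / QQ I \<sigma> x ^ p \<partial>NN I \<sigma>)"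
  proof (rule Bochner_Integration.integral_cong[OF refl])
    fix x
    have "H x = Hp x - Hn x" by (simp add: Hp_def Hn_def max_def)
    then show "H x / QQ I \<sigma> x ^ p = Hp x / QQ I \<sigma> x ^ p - Hn x / QQ I \<sigma> x ^ p"
      by (simp add: diff_divide_distrib)
  qed
  also have "\<dots> = (\<integral>x. Hp x / QQ I \<sigma> x ^ p \<partial>NN I \<sigma>) - (\<integral>x. Hn x / QQ I \<sigma> x ^ p \<partial>NN I \<sigma>)"
    by (rule Bochner_Integration.integral_diff; rule intD) (use Hpb in auto)
  also have "\<dots> = (\<integral>x. Hp x \<partial>NN I \<sigma>) / P - (\<integral>x. Hn x \<partial>NN I \<sigma>) / P"
  proof -
    have hHp: "hom I p Hp" unfolding Hp_def by (rule hom_max[OF h])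
    have hHn: "hom I p Hn" unfolding Hn_def by (rule hom_max[OF hom_uminus[OF h]])
    have "\<And>x. Hp x \<ge> 0" "\<And>x. Hn x \<ge> 0" by (auto simp: Hp_def Hn_def)
    then show ?thesis using part[OF Hpm _ hHp] part[OF Hnm _ hHn] by simp
  qed
  also have "\<dots> = ((\<integral>x. Hp x \<partial>NN I \<sigma>) - (\<integral>x. Hn x \<partial>NN I \<sigma>)) / P" by (simp add: diff_divide_distrib)
  also have "(\<integral>x. Hp x \<partial>NN I \<sigma>) - (\<integral>x. Hn x \<partial>NN I \<sigma>) = (\<integral>x. Hp x - Hn x \<partial>NN I \<sigma>)"
    by (rule Bochner_Integration.integral_diff[symmetric]; rule intH) (use Hpb in auto)
  also have "(\<integral>x. Hp x - Hn x \<partial>NN I \<sigma>) = (\<integral>x. H x \<partial>NN I \<sigma>)"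
    by (rule Bochner_Integration.integral_cong[OF refl]) (simp add: Hp_def Hn_def max_def)
  finally show "(\<integral>x. H x / QQ I \<sigma> x ^ p \<partial>NN I \<sigma>) = (\<integral>x. H x \<partial>NN I \<sigma>) / (\<Prod>j\<in>{1..p}. real (card I) + 2 * real j - 2)"
    by (simp add: P_def)
qed

lemma mono_cong:
  assumes "f 0 = g 0" "\<And>i. i \<in> {1..k} \<Longrightarrow> f (ms i) = g (ms i)"
  shows "monomial_u f k ms q0 q q' = monomial_u g k ms q0 q q'"
  unfolding monomial_u_def using assms by (intro arg_cong2[where f="(*)"] prod.cong) auto

lemma mono_scale:
  fixes c :: real
  shows "monomial_u (\<lambda>m. of_real c * f m) k ms q0 q q'
     = of_real (c ^ (q0 + (\<Sum>i\<in>{1..k}. q i + q' i))) * monomial_u f k ms q0 q q'"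
proof -
  have "(\<Prod>i\<in>{1..k}. (of_real c * f (ms i)) ^ q i * cnj (of_real c * f (ms i)) ^ q' i)
      = (\<Prod>i\<in>{1..k}. of_real (c ^ (q i + q' i)) * (f (ms i) ^ q i * cnj (f (ms i)) ^ q' i))"
    by (intro prod.cong refl) (simp add: power_mult_distrib power_add)
  also have "\<dots> = of_real (\<Prod>i\<in>{1..k}. c ^ (q i + q' i)) * (\<Prod>i\<in>{1..k}. f (ms i) ^ q i * cnj (f (ms i)) ^ q' i)"
    by (simp add: prod.distrib)
  also have "(\<Prod>i\<in>{1..k}. c ^ (q i + q' i)) = c ^ (\<Sum>i\<in>{1..k}. q i + q' i)"
    by (simp add: power_sum)
  finally show ?thesis unfolding monomial_u_def
    by (simp add: power_mult_distrib power_add mult_ac)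
qed

lemma mono_norm:
  fixes B :: real
  assumes B: "B \<ge> 0" and b0: "norm (f 0) \<le> B" and b: "\<And>i. i \<in> {1..k} \<Longrightarrow> norm (f (ms i)) \<le> B"
  shows "norm (monomial_u f k ms q0 q q') \<le> B ^ (q0 + (\<Sum>i\<in>{1..k}. q i + q' i))"
proof -
  have "norm (monomial_u f k ms q0 q q') = norm (f 0) ^ q0 * (\<Prod>i\<in>{1..k}. norm (f (ms i)) ^ q i * norm (f (ms i)) ^ q' i)"
    unfolding monomial_u_def by (simp add: norm_mult norm_power prod_norm[symmetric])
  also have "\<dots> \<le> B ^ q0 * (\<Prod>i\<in>{1..k}. B ^ q i * B ^ q' i)"
    by (intro mult_mono power_mono prod_mono conjI b0 b mult_nonneg_nonneg prod_nonneg zero_le_power B norm_ge_zero) auto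
  also have "\<dots> = B ^ (q0 + (\<Sum>i\<in>{1..k}. q i + q' i))"
    by (simp add: power_add power_sum)
  finally show ?thesis .
qed

lemma sum_sym_int:
  fixes f :: "int \<Rightarrow> 'b::comm_monoid_add"
  shows "(\<Sum>m\<in>{- int l..int l}. f m) = f 0 + (\<Sum>m\<in>{1..l}. f (int m) + f (- int m))"
proof (induction l)
  case 0
  then show ?case by simp
next
  case (Suc l)
  have "{- int (Suc l)..int (Suc l)} = insert (int (Suc l)) (insert (- int (Suc l)) {- int l..int l})"
    by auto
  then have "(\<Sum>m\<in>{- int (Suc l)..int (Suc l)}. f m) = f (int (Suc l)) + (f (- int (Suc l)) + (\<Sum>m\<in>{- int l..int l}. f m))"
    by simp
  also have "\<dots> = f 0 + (\<Sum>m\<in>{1..Suc l}. f (int m) + f (- int m))"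
    unfolding Suc.IH by (simp add: add_ac)
  finally show ?case .
qed

definition sigC :: "real \<Rightarrow> nat \<times> bool \<Rightarrow> real" where
  "sigC C i = (if fst i = 0 then sqrt C else sqrt (C/2))"

lemma coeff_index_eq: "coeff_index l = insert (0, False) ({1..l} \<times> UNIV)"
  by (auto simp: coeff_index_def)

lemma coeff_index_fin: "finite (coeff_index l)" by (simp add: coeff_index_def)
lemma coeff_index_ne: "coeff_index l \<noteq> {}" by (simp add: coeff_index_def)

lemma card_coeff_index: "card (coeff_index l) = 2 * l + 1"
proof -
  have "(0, False) \<notin> {1..l} \<times> (UNIV :: bool set)" by auto
  then have "card (coeff_index l) = Suc (card ({1..l} \<times> (UNIV :: bool set)))"
    unfolding coeff_index_eq by (simp add: finite_cartesian_product)
  also have "card ({1..l} \<times> (UNIV :: bool set)) = 2 * l" by (simp add: card_cartesian_product)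
  finally show ?thesis by simp
qed

lemma QQ_coeff:
  assumes C: "C > 0"
  shows "C * QQ (coeff_index l) (sigC C) x = (x (0, False))\<^sup>2 + 2 * (\<Sum>m\<in>{1..l}. (x (m, False))\<^sup>2 + (x (m, True))\<^sup>2)"
proof -
  have "(0, False) \<notin> {1..l} \<times> (UNIV :: bool set)" by auto
  then have "QQ (coeff_index l) (sigC C) x = (x (0, False))\<^sup>2 / (sigC C (0, False))\<^sup>2
      + (\<Sum>i\<in>{1..l} \<times> UNIV. (x i)\<^sup>2 / (sigC C i)\<^sup>2)"
    unfolding QQ_def coeff_index_eq by (simp add: finite_cartesian_product)
  also have "(\<Sum>i\<in>{1..l} \<times> UNIV. (x i)\<^sup>2 / (sigC C i)\<^sup>2) = (\<Sum>m\<in>{1..l}. \<Sum>b\<in>UNIV. (x (m, b))\<^sup>2 / (sigC C (m, b))\<^sup>2)"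
    by (simp add: sum.cartesian_product split_def)
  also have "\<dots> = (\<Sum>m\<in>{1..l}. ((x (m, False))\<^sup>2 + (x (m, True))\<^sup>2) / (C/2))"
    using C by (intro sum.cong refl) (auto simp: sigC_def UNIV_bool add_divide_distrib)
  also have "(\<Sum>m\<in>{1..l}. ((x (m, False))\<^sup>2 + (x (m, True))\<^sup>2) / (C/2))
      = (\<Sum>m\<in>{1..l}. (x (m, False))\<^sup>2 + (x (m, True))\<^sup>2) / (C/2)"
    by (rule sum_divide_distrib[symmetric])
  also have "(sigC C (0, False))\<^sup>2 = C" using C by (simp add: sigC_def)
  finally have e: "QQ (coeff_index l) (sigC C) x = (x (0, False))\<^sup>2 / C
      + (\<Sum>m\<in>{1..l}. (x (m, False))\<^sup>2 + (x (m, True))\<^sup>2) / (C/2)" .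
  have g1: "\<And>y. C * (y / C) = y" "\<And>y. C * (y / (C/2)) = 2 * y" using C by auto
  show ?thesis unfolding e distrib_left g1 ..
qed

lemma Chat_coeff:
  assumes im0: "Im (a 0 \<omega>) = 0"
  shows "(2 * real l + 1) * Chat l a \<omega> = (Re (a 0 \<omega>))\<^sup>2 + 2 * (\<Sum>m\<in>{1..l}. (Re (a m \<omega>))\<^sup>2 + (Im (a m \<omega>))\<^sup>2)"
proof -
  have "(\<Sum>m\<in>{- int l..int l}. (cmod (coeff_ext a m \<omega>))\<^sup>2)
      = (cmod (coeff_ext a 0 \<omega>))\<^sup>2 + (\<Sum>m\<in>{1..l}. (cmod (coeff_ext a (int m) \<omega>))\<^sup>2 + (cmod (coeff_ext a (- int m) \<omega>))\<^sup>2)"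
    by (rule sum_sym_int)
  also have "\<dots> = (Re (a 0 \<omega>))\<^sup>2 + 2 * (\<Sum>m\<in>{1..l}. (Re (a m \<omega>))\<^sup>2 + (Im (a m \<omega>))\<^sup>2)"
  proof -
    have "(cmod (coeff_ext a 0 \<omega>))\<^sup>2 = (Re (a 0 \<omega>))\<^sup>2"
      using im0 by (simp add: coeff_ext_def cmod_power2)
    moreover have "(\<Sum>m\<in>{1..l}. (cmod (coeff_ext a (int m) \<omega>))\<^sup>2 + (cmod (coeff_ext a (- int m) \<omega>))\<^sup>2)
        = (\<Sum>m\<in>{1..l}. 2 * ((Re (a m \<omega>))\<^sup>2 + (Im (a m \<omega>))\<^sup>2))"
    proof (intro sum.cong refl)
      fix m assume m: "m \<in> {1..l}"
      have "coeff_ext a (- int m) \<omega> = (-1) ^ m * cnj (a m \<omega>)"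
        using m by (simp add: coeff_ext_def)
      then have "cmod (coeff_ext a (- int m) \<omega>) = cmod (a m \<omega>)"
        by (simp add: norm_mult norm_power)
      moreover have "coeff_ext a (int m) \<omega> = a m \<omega>" by (simp add: coeff_ext_def)
      ultimately show "(cmod (coeff_ext a (int m) \<omega>))\<^sup>2 + (cmod (coeff_ext a (- int m) \<omega>))\<^sup>2
          = 2 * ((Re (a m \<omega>))\<^sup>2 + (Im (a m \<omega>))\<^sup>2)"
        by (simp add: cmod_power2)
    qed
    ultimately show ?thesis by (simp add: sum_distrib_left)
  qed
  finally show ?thesis unfolding Chat_def by simp
qed

definition AA :: "(nat \<times> bool \<Rightarrow> real) \<Rightarrow> nat \<Rightarrow> complex" where
  "AA x m = complex_of_real (x (m, False)) + (if m = 0 then 0 else \<i> * complex_of_real (x (m, True)))"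

lemma AA_Re: "Re (AA x m) = x (m, False)" by (simp add: AA_def)
lemma AA_Im: "Im (AA x m) = (if m = 0 then 0 else x (m, True))" by (simp add: AA_def)

lemma AA_scale:
  assumes "m = 0 \<or> m \<in> {1..l}"
  shows "AA (sc (coeff_index l) c x) m = of_real c * AA x m"
  using assms by (auto simp: AA_def sc_def coeff_index_def distrib_left)

lemma F_hom:
  assumes ms: "\<And>i. i \<in> {1..k} \<Longrightarrow> 1 \<le> ms i \<and> ms i \<le> l"
  shows "monomial_u (AA (sc (coeff_index l) c x)) k ms q0 q q'
       = of_real (c ^ (q0 + (\<Sum>i\<in>{1..k}. q i + q' i))) * monomial_u (AA x) k ms q0 q q'"
proof -
  have "monomial_u (AA (sc (coeff_index l) c x)) k ms q0 q q' = monomial_u (\<lambda>m. of_real c * AA x m) k ms q0 q q'"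
    by (rule mono_cong) (use ms in \<open>auto intro!: AA_scale\<close>)
  then show ?thesis by (simp add: mono_scale)
qed

lemma AA_norm:
  assumes C: "C > 0" and m: "m = 0 \<or> m \<in> {1..l}"
  shows "norm (AA x m) \<le> sqrt (C * QQ (coeff_index l) (sigC C) x)"
proof -
  let ?f = "\<lambda>i. (x i)\<^sup>2 / (sigC C i)\<^sup>2"
  have nn: "\<And>i. 0 \<le> ?f i" by simp
  have "(norm (AA x m))\<^sup>2 \<le> C * QQ (coeff_index l) (sigC C) x"
  proof (cases "m = 0")
    case True
    have "?f (0, False) \<le> QQ (coeff_index l) (sigC C) x"
      unfolding QQ_def by (rule member_le_sum) (auto simp: coeff_index_def)
    moreover have "?f (0, False) = (x (0, False))\<^sup>2 / C" using C by (simp add: sigC_def)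
    ultimately have "(x (0, False))\<^sup>2 \<le> C * QQ (coeff_index l) (sigC C) x"
      using C by (simp add: divide_le_eq mult.commute)
    then show ?thesis using True by (simp add: cmod_power2 AA_Re AA_Im)
  next
    case False
    then have m1: "m \<in> {1..l}" using m by simp
    have "(\<Sum>i\<in>{(m, False), (m, True)}. ?f i) \<le> QQ (coeff_index l) (sigC C) x"
      unfolding QQ_def by (rule sum_mono2) (use m1 in \<open>auto simp: coeff_index_def\<close>)
    moreover have "(\<Sum>i\<in>{(m, False), (m, True)}. ?f i) = ((x (m, False))\<^sup>2 + (x (m, True))\<^sup>2) / (C/2)"
      using C m1 by (simp add: sigC_def add_divide_distrib)
    ultimately have "(x (m, False))\<^sup>2 + (x (m, True))\<^sup>2 \<le> C / 2 * QQ (coeff_index l) (sigC C) x"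
      using C by (simp add: divide_le_eq mult.commute)
    moreover have "C / 2 * QQ (coeff_index l) (sigC C) x \<le> C * QQ (coeff_index l) (sigC C) x"
      using C QQ_nonneg[of "coeff_index l" "sigC C" x] by (intro mult_right_mono) auto
    ultimately show ?thesis using False by (simp add: cmod_power2 AA_Re AA_Im)
  qed
  then have "sqrt ((norm (AA x m))\<^sup>2) \<le> sqrt (C * QQ (coeff_index l) (sigC C) x)"
    by (rule real_sqrt_le_mono)
  then show ?thesis by simp
qed

lemma F_norm:
  assumes C: "C > 0" and ms: "\<And>i. i \<in> {1..k} \<Longrightarrow> 1 \<le> ms i \<and> ms i \<le> l"
    and deg: "q0 + (\<Sum>i\<in>{1..k}. q i + q' i) = 2 * p"
  shows "norm (monomial_u (AA x) k ms q0 q q') \<le> C ^ p * QQ (coeff_index l) (sigC C) x ^ p"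
proof -
  have B: "sqrt (C * QQ (coeff_index l) (sigC C) x) \<ge> 0" using C QQ_nonneg[of "coeff_index l" "sigC C" x] by simp
  have "norm (monomial_u (AA x) k ms q0 q q') \<le> sqrt (C * QQ (coeff_index l) (sigC C) x) ^ (2 * p)"
    unfolding deg[symmetric]
    by (rule mono_norm[OF B]) (use C ms in \<open>auto intro!: AA_norm\<close>)
  also have "\<dots> = C ^ p * QQ (coeff_index l) (sigC C) x ^ p"
    using C QQ_nonneg[of "coeff_index l" "sigC C" x]
    by (simp add: power_mult power_mult_distrib)
  finally show ?thesis .
qed

lemma AA_meas:
  assumes m: "m = 0 \<or> m \<in> {1..l}"
  shows "(\<lambda>x. AA x m) \<in> borel_measurable (PiM (coeff_index l) (\<lambda>_. borel))"
proof (cases "m = 0")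
  case True
  have [measurable]: "(0, False) \<in> coeff_index l" by (simp add: coeff_index_def)
  show ?thesis unfolding AA_def using True by simp
next
  case False
  then have [measurable]: "(m, False) \<in> coeff_index l" "(m, True) \<in> coeff_index l"
    using m by (auto simp: coeff_index_def)
  show ?thesis unfolding AA_def using False by simp
qed

lemma F_meas:
  assumes ms: "\<And>i. i \<in> {1..k} \<Longrightarrow> 1 \<le> ms i \<and> ms i \<le> l"
  shows "(\<lambda>x. monomial_u (AA x) k ms q0 q q') \<in> borel_measurable (PiM (coeff_index l) (\<lambda>_. borel))"
  unfolding monomial_u_def
proof (intro borel_measurable_times borel_measurable_power borel_measurable_prod)
  show "(\<lambda>x. AA x 0) \<in> borel_measurable (PiM (coeff_index l) (\<lambda>_. borel))" by (rule AA_meas) simp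
  fix i assume i: "i \<in> {1..k}"
  have [measurable]: "(\<lambda>x. AA x (ms i)) \<in> borel_measurable (PiM (coeff_index l) (\<lambda>_. borel))"
    using ms[OF i] by (intro AA_meas) auto
  show "(\<lambda>x. AA x (ms i)) \<in> borel_measurable (PiM (coeff_index l) (\<lambda>_. borel))" by simp
  have [measurable]: "(ms i, False) \<in> coeff_index l" "(ms i, True) \<in> coeff_index l"
    using ms[OF i] by (auto simp: coeff_index_def)
  show "(\<lambda>x. cnj (AA x (ms i))) \<in> borel_measurable (PiM (coeff_index l) (\<lambda>_. borel))"
    unfolding AA_def using ms[OF i] by simp
qed

theorem theorem4p1:
  fixes M :: "'a measure" and a :: "nat \<Rightarrow> 'a \<Rightarrow> complex"
    and l k p q0 :: nat and C :: real and ms q q' :: "nat \<Rightarrow> nat"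
  assumes "prob_space M"
    and "l \<ge> 1" and "C > 0"
    and "distributed M lborel (\<lambda>\<omega>. Re (a 0 \<omega>)) (normal_density 0 (sqrt C))"
    and "\<And>\<omega>. \<omega> \<in> space M \<Longrightarrow> Im (a 0 \<omega>) = 0"
    and "\<And>m. m \<in> {1..l} \<Longrightarrow> distributed M lborel (\<lambda>\<omega>. Re (a m \<omega>)) (normal_density 0 (sqrt (C / 2)))"
    and "\<And>m. m \<in> {1..l} \<Longrightarrow> distributed M lborel (\<lambda>\<omega>. Im (a m \<omega>)) (normal_density 0 (sqrt (C / 2)))"
    and "prob_space.indep_vars M (\<lambda>_. borel) (coeff_coord a) (coeff_index l)"
    and "strict_mono_on {1..k} ms"
    and "\<And>i. i \<in> {1..k} \<Longrightarrow> 1 \<le> ms i \<and> ms i \<le> l"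
    and "q0 + (\<Sum>i\<in>{1..k}. q i + q' i) = 2 * p"
  shows "integral\<^sup>L M (\<lambda>\<omega>. monomial_u (\<lambda>m. a m \<omega> / complex_of_real (sqrt (Chat l a \<omega>))) k ms q0 q q')
       = integral\<^sup>L M (\<lambda>\<omega>. monomial_u (\<lambda>m. a m \<omega> / complex_of_real (sqrt C)) k ms q0 q q')
         * complex_of_real (g_lp l p)"
proof -
  note C = assms(3) and im0 = assms(5) and ms = assms(10) and deg = assms(11)
  interpret P: prob_space M by (rule assms(1))
  define I where "I = coeff_index l"
  define \<sigma> where "\<sigma> = sigC C"
  have sp: "\<And>i. \<sigma> i > 0" using C by (simp add: \<sigma>_def sigC_def)
  have fin: "finite I" and ne: "I \<noteq> {}" by (simp_all add: I_def coeff_index_fin coeff_index_ne)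
  have cardI: "real (card I) = 2 * real l + 1" by (simp add: I_def card_coeff_index)
  define X where "X \<omega> = (\<lambda>i\<in>I. coeff_coord a i \<omega>)" for \<omega>
  define F where "F x = monomial_u (AA x) k ms q0 q q'" for x
  have distc: "distributed M lborel (coeff_coord a i) (normal_density 0 (\<sigma> i))" if i: "i \<in> I" for i
  proof -
    obtain m b where mb: "i = (m, b)" by force
    show ?thesis
    proof (cases "m = 0")
      case True
      then have "b = False" using i mb by (auto simp: I_def coeff_index_def)
      then show ?thesis using assms(4) True mb by (simp add: coeff_coord_def \<sigma>_def sigC_def)
    next
      case False
      then have m: "m \<in> {1..l}" using i mb by (auto simp: I_def coeff_index_def)
      show ?thesis
      proof (cases b)
        case True
        then show ?thesis using assms(7)[OF m] False mb by (simp add: coeff_coord_def \<sigma>_def sigC_def)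
      next
        case b: False
        then show ?thesis using assms(6)[OF m] False mb by (simp add: coeff_coord_def \<sigma>_def sigC_def)
      qed
    qed
  qed
  have rv: "coeff_coord a i \<in> measurable M borel" if i: "i \<in> I" for i
    using distributed_measurable[OF distc[OF i]] by (simp add: measurable_cong_sets[OF refl sets_lborel])
  have de: "distr M borel (coeff_coord a i) = density lborel (\<lambda>y. ennreal (normal_density 0 (\<sigma> i) y))" if i: "i \<in> I" for i
  proof -
    have "distr M borel (coeff_coord a i) = distr M lborel (coeff_coord a i)"
      by (rule distr_cong) auto
    also have "\<dots> = density lborel (\<lambda>y. ennreal (normal_density 0 (\<sigma> i) y))"
      using distributed_distr_eq_density[OF distc[OF i]] .
    finally show ?thesis .
  qed
  have distX: "distr M (PiM I (\<lambda>_. borel)) X = NN I \<sigma>"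
  proof -
    have "distr M (PiM I (\<lambda>_. borel)) X = PiM I (\<lambda>i. distr M borel (coeff_coord a i))"
      using P.indep_vars_iff_distr_eq_PiM'[OF ne rv] assms(8) unfolding X_def I_def by simp
    also have "\<dots> = NN I \<sigma>" unfolding NN_def by (intro PiM_cong refl de)
    finally show ?thesis .
  qed
  have Xm: "X \<in> measurable M (PiM I (\<lambda>_. borel))"
    unfolding X_def by (intro measurable_restrict rv)
  have XA: "a m \<omega> = AA (X \<omega>) m" if w: "\<omega> \<in> space M" and m: "m = 0 \<or> m \<in> {1..l}" for \<omega> m
  proof (cases "m = 0")
    case True
    have "(0, False) \<in> I" by (simp add: I_def coeff_index_def)
    then have "X \<omega> (0, False) = Re (a 0 \<omega>)" by (simp add: X_def coeff_coord_def)
    then show ?thesis using True im0[OF w] by (simp add: AA_def complex_eq_iff)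
  next
    case False
    then have "(m, False) \<in> I" "(m, True) \<in> I" using m by (auto simp: I_def coeff_index_def)
    then have "X \<omega> (m, False) = Re (a m \<omega>)" "X \<omega> (m, True) = Im (a m \<omega>)" by (simp_all add: X_def coeff_coord_def)
    then show ?thesis using False by (simp add: AA_def complex_eq_iff)
  qed
  have mono_div: "monomial_u (\<lambda>m. a m \<omega> / complex_of_real s) k ms q0 q q' = of_real ((1/s)^(2*p)) * F (X \<omega>)"
    if w: "\<omega> \<in> space M" for \<omega> s
  proof -
    have "monomial_u (\<lambda>m. a m \<omega> / complex_of_real s) k ms q0 q q' = monomial_u (\<lambda>m. of_real (1/s) * AA (X \<omega>) m) k ms q0 q q'"
    proof (rule mono_cong)
      show "a 0 \<omega> / complex_of_real s = of_real (1/s) * AA (X \<omega>) 0" using XA[OF w, of 0] by (simp add: divide_inverse mult.commute)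
      fix i assume i: "i \<in> {1..k}"
      show "a (ms i) \<omega> / complex_of_real s = of_real (1/s) * AA (X \<omega>) (ms i)"
        using XA[OF w, of "ms i"] ms[OF i] by (simp add: divide_inverse mult.commute)
    qed
    also have "\<dots> = of_real ((1/s) ^ (q0 + (\<Sum>i\<in>{1..k}. q i + q' i))) * monomial_u (AA (X \<omega>)) k ms q0 q q'"
      by (rule mono_scale)
    finally show ?thesis unfolding deg F_def .
  qed
  have ChatQ: "Chat l a \<omega> = C * QQ I \<sigma> (X \<omega>) / (2 * real l + 1)" if w: "\<omega> \<in> space M" for \<omega>
  proof -
    have "(2 * real l + 1) * Chat l a \<omega> = (Re (a 0 \<omega>))\<^sup>2 + 2 * (\<Sum>m\<in>{1..l}. (Re (a m \<omega>))\<^sup>2 + (Im (a m \<omega>))\<^sup>2)"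
      by (rule Chat_coeff[of a, OF im0[OF w]])
    also have "\<dots> = (X \<omega> (0, False))\<^sup>2 + 2 * (\<Sum>m\<in>{1..l}. (X \<omega> (m, False))\<^sup>2 + (X \<omega> (m, True))\<^sup>2)"
      by (simp add: X_def I_def coeff_index_def coeff_coord_def)
    also have "\<dots> = C * QQ I \<sigma> (X \<omega>)" unfolding I_def \<sigma>_def by (rule QQ_coeff[OF C, symmetric])
    finally show ?thesis by (simp add: field_simps)
  qed
  define Pr where "Pr = (\<Prod>j\<in>{1..p}. real (card I) + 2 * real j - 2)"
  define Fd where "Fd x = F x / complex_of_real (QQ I \<sigma> x ^ p)" for x
  have sN: "\<And>f. f \<in> borel_measurable (NN I \<sigma>) \<longleftrightarrow> f \<in> borel_measurable (PiM I (\<lambda>_. borel))"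
    using measurable_cong_sets[OF sets_NN refl] by blast
  interpret N: prob_space "NN I \<sigma>" by (rule prob_NN[OF sp])
  have Fm[measurable]: "F \<in> borel_measurable (PiM I (\<lambda>_. borel))" unfolding F_def I_def by (rule F_meas[OF ms])
  have Qm[measurable]: "QQ I \<sigma> \<in> borel_measurable (PiM I (\<lambda>_. borel))" unfolding QQ_def by measurable
  have Fdm[measurable]: "Fd \<in> borel_measurable (PiM I (\<lambda>_. borel))" unfolding Fd_def by measurable
  have Fh: "F (sc I c x) = of_real (c ^ (2 * p)) * F x" for c x
    unfolding F_def I_def using F_hom[OF ms] deg by simp
  have Fb: "norm (F x) \<le> C ^ p * QQ I \<sigma> x ^ p" for x
    unfolding F_def I_def \<sigma>_def by (rule F_norm[OF C ms deg])
  have Cp: "C ^ p \<ge> 0" using C by simp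
  have homRe: "hom I p (\<lambda>x. Re (F x))" unfolding hom_def using Fh by simp
  have homIm: "hom I p (\<lambda>x. Im (F x))" unfolding hom_def using Fh by simp
  have bRe: "\<bar>Re (F x)\<bar> \<le> C ^ p * QQ I \<sigma> x ^ p" for x using abs_Re_le_cmod[of "F x"] Fb[of x] by linarith
  have bIm: "\<bar>Im (F x)\<bar> \<le> C ^ p * QQ I \<sigma> x ^ p" for x using abs_Im_le_cmod[of "F x"] Fb[of x] by linarith
  have ReFm: "(\<lambda>x. Re (F x)) \<in> borel_measurable (PiM I (\<lambda>_. borel))" by measurable
  have ImFm: "(\<lambda>x. Im (F x)) \<in> borel_measurable (PiM I (\<lambda>_. borel))" by measurable
  note RE = real_div_Qp[OF fin ne sp ReFm homRe Cp bRe]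
  note IM = real_div_Qp[OF fin ne sp ImFm homIm Cp bIm]
  have iQ: "integrable (NN I \<sigma>) (\<lambda>x. QQ I \<sigma> x ^ p)"
    by (rule real_div_Qp(1)[OF fin ne sp _ hom_Qp, where K=1]) (auto simp: QQ_nonneg)
  have iF: "integrable (NN I \<sigma>) F"
  proof (rule Bochner_Integration.integrable_bound[OF integrable_mult_right[OF iQ, of "C ^ p"]])
    show "F \<in> borel_measurable (NN I \<sigma>)" unfolding sN by (rule Fm)
    have "norm (F x) \<le> norm (C ^ p * QQ I \<sigma> x ^ p)" for x
      using Fb[of x] Cp QQ_nonneg[of I \<sigma> x] by (simp add: abs_mult)
    then show "AE x in NN I \<sigma>. norm (F x) \<le> norm (C ^ p * QQ I \<sigma> x ^ p)" by simp
  qed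
  have iFd: "integrable (NN I \<sigma>) Fd"
  proof (rule N.integrable_const_bound[where B="C ^ p"])
    show "Fd \<in> borel_measurable (NN I \<sigma>)" unfolding sN by (rule Fdm)
    have "norm (Fd x) \<le> C ^ p" for x
    proof (cases "QQ I \<sigma> x = 0 \<and> p > 0")
      case True
      then have "QQ I \<sigma> x ^ p = 0" by simp
      then have "Fd x = 0" unfolding Fd_def by (simp only: of_real_0 division_ring_divide_zero)
      then show ?thesis using Cp by simp
    next
      case False
      have q: "QQ I \<sigma> x ^ p > 0"
      proof (cases "p = 0")
        case True then show ?thesis by simp
      next
        case p: False
        then have "QQ I \<sigma> x \<noteq> 0" using False by blast
        then have "QQ I \<sigma> x > 0" using QQ_nonneg[of I \<sigma> x] by linarith
        then show ?thesis by (rule zero_less_power)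
      qed
      have "norm (Fd x) = norm (F x) / QQ I \<sigma> x ^ p" unfolding Fd_def
        by (simp only: norm_divide norm_of_real abs_of_pos[OF q])
      also have "\<dots> \<le> C ^ p" using Fb[of x] by (simp only: pos_divide_le_eq[OF q])
      finally show ?thesis .
    qed
    then show "AE x in NN I \<sigma>. norm (Fd x) \<le> C ^ p" by simp
  qed
  have keyeq: "(\<integral>x. Fd x \<partial>NN I \<sigma>) = (\<integral>x. F x \<partial>NN I \<sigma>) / of_real Pr"
  proof (rule complex_eqI)
    have "Re (\<integral>x. Fd x \<partial>NN I \<sigma>) = (\<integral>x. Re (Fd x) \<partial>NN I \<sigma>)" by (rule integral_Re[OF iFd, symmetric])
    also have "\<dots> = (\<integral>x. Re (F x) / QQ I \<sigma> x ^ p \<partial>NN I \<sigma>)" by (simp add: Fd_def)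
    also have "\<dots> = (\<integral>x. Re (F x) \<partial>NN I \<sigma>) / Pr" unfolding Pr_def by (rule RE(3))
    also have "(\<integral>x. Re (F x) \<partial>NN I \<sigma>) = Re (\<integral>x. F x \<partial>NN I \<sigma>)" by (rule integral_Re[OF iF])
    finally show "Re (\<integral>x. Fd x \<partial>NN I \<sigma>) = Re ((\<integral>x. F x \<partial>NN I \<sigma>) / of_real Pr)" by simp
    have "Im (\<integral>x. Fd x \<partial>NN I \<sigma>) = (\<integral>x. Im (Fd x) \<partial>NN I \<sigma>)" by (rule integral_Im[OF iFd, symmetric])
    also have "\<dots> = (\<integral>x. Im (F x) / QQ I \<sigma> x ^ p \<partial>NN I \<sigma>)" by (simp add: Fd_def)
    also have "\<dots> = (\<integral>x. Im (F x) \<partial>NN I \<sigma>) / Pr" unfolding Pr_def by (rule IM(3))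
    also have "(\<integral>x. Im (F x) \<partial>NN I \<sigma>) = Im (\<integral>x. F x \<partial>NN I \<sigma>)" by (rule integral_Im[OF iF])
    finally show "Im (\<integral>x. Fd x \<partial>NN I \<sigma>) = Im ((\<integral>x. F x \<partial>NN I \<sigma>) / of_real Pr)" by simp
  qed
  define A where "A = ((2 * real l + 1) / C) ^ p"
  define B where "B = (1 / C) ^ p"
  have LHSpt: "monomial_u (\<lambda>m. a m \<omega> / complex_of_real (sqrt (Chat l a \<omega>))) k ms q0 q q' = of_real A * Fd (X \<omega>)"
    if w: "\<omega> \<in> space M" for \<omega>
  proof -
    have Ch: "Chat l a \<omega> \<ge> 0" using ChatQ[OF w] C QQ_nonneg[of I \<sigma> "X \<omega>"] by simp
    have "(1 / sqrt (Chat l a \<omega>)) ^ (2 * p) = ((1 / sqrt (Chat l a \<omega>))\<^sup>2) ^ p" by (simp add: power_mult)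
    also have "(1 / sqrt (Chat l a \<omega>))\<^sup>2 = 1 / Chat l a \<omega>" using Ch by (simp add: power_divide)
    also have "1 / Chat l a \<omega> = ((2 * real l + 1) / C) / QQ I \<sigma> (X \<omega>)" unfolding ChatQ[OF w] by simp
    also have "(((2 * real l + 1) / C) / QQ I \<sigma> (X \<omega>)) ^ p = A / QQ I \<sigma> (X \<omega>) ^ p" by (simp add: A_def power_divide power_mult_distrib)
    finally have e: "(1 / sqrt (Chat l a \<omega>)) ^ (2 * p) = A / QQ I \<sigma> (X \<omega>) ^ p" .
    show ?thesis unfolding mono_div[OF w] e Fd_def by (simp add: of_real_divide)
  qed
  have RHSpt: "monomial_u (\<lambda>m. a m \<omega> / complex_of_real (sqrt C)) k ms q0 q q' = of_real B * F (X \<omega>)"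
    if w: "\<omega> \<in> space M" for \<omega>
  proof -
    have "(1 / sqrt C) ^ (2 * p) = ((1 / sqrt C)\<^sup>2) ^ p" by (simp add: power_mult)
    also have "(1 / sqrt C)\<^sup>2 = 1 / C" using C by (simp add: power_divide)
    finally have e: "(1 / sqrt C) ^ (2 * p) = B" by (simp add: B_def)
    show ?thesis unfolding mono_div[OF w] e ..
  qed
  have intM: "(\<integral>\<omega>. G (X \<omega>) \<partial>M) = (\<integral>x. G x \<partial>NN I \<sigma>)" if Gm: "G \<in> borel_measurable (PiM I (\<lambda>_. borel))"
    for G :: "(nat \<times> bool \<Rightarrow> real) \<Rightarrow> complex"
    using integral_distr[OF Xm Gm] distX by simp
  have "integral\<^sup>L M (\<lambda>\<omega>. monomial_u (\<lambda>m. a m \<omega> / complex_of_real (sqrt (Chat l a \<omega>))) k ms q0 q q')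
      = (\<integral>\<omega>. of_real A * Fd (X \<omega>) \<partial>M)"
    by (rule Bochner_Integration.integral_cong[OF refl LHSpt])
  also have "\<dots> = of_real A * (\<integral>x. Fd x \<partial>NN I \<sigma>)" by (simp add: intM[OF Fdm])
  also have "\<dots> = of_real A * ((\<integral>x. F x \<partial>NN I \<sigma>) / of_real Pr)" by (simp add: keyeq)
  also have "\<dots> = of_real B * (\<integral>x. F x \<partial>NN I \<sigma>) * of_real (g_lp l p)"
  proof -
    have pr: "Pr = (\<Prod>j\<in>{1..p}. 2 * real l + 2 * real j - 1)"
      unfolding Pr_def cardI by (intro prod.cong refl) simp
    have g: "g_lp l p = (2 * real l + 1) ^ p / Pr"
      unfolding g_lp_def pr by (simp add: prod_dividef)
    have "A / Pr = B * g_lp l p" unfolding g A_def B_def by (simp add: power_divide)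
    then have "complex_of_real A / of_real Pr = of_real B * of_real (g_lp l p)"
      by (metis of_real_divide of_real_mult)
    then show ?thesis by (metis (no_types, lifting) mult.commute mult.left_commute times_divide_eq_left times_divide_eq_right)
  qed
  also have "of_real B * (\<integral>x. F x \<partial>NN I \<sigma>) = (\<integral>\<omega>. of_real B * F (X \<omega>) \<partial>M)" by (simp add: intM[OF Fm])
  also have "\<dots> = integral\<^sup>L M (\<lambda>\<omega>. monomial_u (\<lambda>m. a m \<omega> / complex_of_real (sqrt C)) k ms q0 q q')"
    by (rule Bochner_Integration.integral_cong[OF refl RHSpt[symmetric]])
  finally show ?thesis .
qed

end
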